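(* Let $r\in[0,\pi/2)$. Suppose that for all $i\ne j$ and all $t\ge 0$, $$\omega_{i}(t)-\omega_{j}(t)-[a_{ij}(t)+a_{ji}(t)]\sin r-\sum_{k\notin \Lambda_{ij}(t),\,k\ne i,j}\big([a_{ik}(t)]^{-}+[a_{jk}(t)]^{-}\big)\sin r-\sum_{k\in \Lambda_{ij}(t)}\min\{a_{ik}(t),a_{jk}(t)\}\sin r<0,$$ where $\Lambda_{ij}(t)=\{k:\ a_{ik}(t)>0\text{ and }a_{jk}(t)>0\}$ and $[z]^{-}=\min\{z,0\}$. Then the set $\mathscr A^{r}$ is invariant for system (TVKR).
   Context: Consider $m\ge 2$ phase oscillators $\theta=(\theta_1,\dots,\theta_m)\in\mathbb R^m$ governed by (TVKR): $\dot\theta_i=\omega_i(t)+\sum_{j=1}^m a_{ij}(t)\sin(\theta_j-\theta_i)$, $i=1,\dots,m$, where $\omega_i$ and $a_{ij}$ are real-valued, piecewise continuous, bounded functions of $t\ge 0$ with $a_{ii}\equiv 0$; the coupling coefficients $a_{ij}$ may take negative values. Write $\theta_{ij}=\theta_i-\theta_j$ for the phase differences (PDs). For $r\in[0,\pi/2)$, $\mathscr A^{r}=\{(\theta_{ij})_{i>j}\in\mathbb R^{m(m-1)/2}: |\theta_{ij}|\le r \text{ for all } i>j\}$. $\mathscr A^r$ is called invariant for (TVKR) if every solution whose phase differences lie in $\mathscr A^r$ at $t=0$ has phase differences in $\mathscr A^r$ for all $t\ge 0$. *)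

theory Defs
  imports "HOL-Analysis.Analysis"
begin

definition piecewise_continuous :: "(real \<Rightarrow> real) \<Rightarrow> bool" where
  "piecewise_continuous f \<longleftrightarrow>
     (\<forall>T. finite {t \<in> {0..T}. \<not> continuous (at t within {0..}) f}) \<and>
     (\<forall>t\<ge>0. \<exists>l. (f \<longlongrightarrow> l) (at_right t)) \<and>
     (\<forall>t>0. \<exists>l. (f \<longlongrightarrow> l) (at_left t))"

definition bounded_fun :: "(real \<Rightarrow> real) \<Rightarrow> bool" where
  "bounded_fun f \<longleftrightarrow> (\<exists>B. \<forall>t\<ge>0. \<bar>f t\<bar> \<le> B)"

definition admissible_TVKR ::
  "nat \<Rightarrow> (nat \<Rightarrow> real \<Rightarrow> real) \<Rightarrow> (nat \<Rightarrow> nat \<Rightarrow> real \<Rightarrow> real) \<Rightarrow> bool" where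
  "admissible_TVKR m \<omega> a \<longleftrightarrow>
     (\<forall>i<m. piecewise_continuous (\<omega> i) \<and> bounded_fun (\<omega> i)) \<and>
     (\<forall>i<m. \<forall>j<m. piecewise_continuous (a i j) \<and> bounded_fun (a i j)) \<and>
     (\<forall>i<m. \<forall>t\<ge>0. a i i t = 0)"

text \<open>A solution of (TVKR) on [0,\<infinity>): each phase is continuous on [0,\<infinity>) and satisfies
the ODE (one-sided derivative at 0) at every t \<ge> 0 outside a countable exceptional set
(allowing corners at the discontinuities of the coefficients).\<close>
definition TVKR_solution ::
  "nat \<Rightarrow> (nat \<Rightarrow> real \<Rightarrow> real) \<Rightarrow> (nat \<Rightarrow> nat \<Rightarrow> real \<Rightarrow> real) \<Rightarrow> (real \<Rightarrow> nat \<Rightarrow> real) \<Rightarrow> bool" where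
  "TVKR_solution m \<omega> a \<theta> \<longleftrightarrow>
     (\<forall>i<m. continuous_on {0..} (\<lambda>t. \<theta> t i)) \<and>
     (\<exists>S. countable S \<and>
        (\<forall>t\<in>{0..} - S. \<forall>i<m.
           ((\<lambda>s. \<theta> s i) has_real_derivative
              (\<omega> i t + (\<Sum>j<m. a i j t * sin (\<theta> t j - \<theta> t i)))) (at t within {0..})))"

definition in_A :: "nat \<Rightarrow> real \<Rightarrow> (nat \<Rightarrow> real) \<Rightarrow> bool" where
  "in_A m r x \<longleftrightarrow> (\<forall>i<m. \<forall>j<m. j < i \<longrightarrow> \<bar>x i - x j\<bar> \<le> r)"

definition invariant_A ::
  "nat \<Rightarrow> (nat \<Rightarrow> real \<Rightarrow> real) \<Rightarrow> (nat \<Rightarrow> nat \<Rightarrow> real \<Rightarrow> real) \<Rightarrow> real \<Rightarrow> bool" where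
  "invariant_A m \<omega> a r \<longleftrightarrow>
     (\<forall>\<theta>. TVKR_solution m \<omega> a \<theta> \<longrightarrow> in_A m r (\<theta> 0) \<longrightarrow> (\<forall>t\<ge>0. in_A m r (\<theta> t)))"

definition neg_part :: "real \<Rightarrow> real" where
  "neg_part z = min z 0"

definition Lambda :: "nat \<Rightarrow> (nat \<Rightarrow> nat \<Rightarrow> real \<Rightarrow> real) \<Rightarrow> nat \<Rightarrow> nat \<Rightarrow> real \<Rightarrow> nat set" where
  "Lambda m a i j t = {k. k < m \<and> a i k t > 0 \<and> a j k t > 0}"

end

theory Submission imports Defs begin
lemma sin_sub_add: 
  fixes c y :: real
  assumes "0 \<le> y" "y \<le> c" "c \<le> pi/2"
  shows "sin c \<le> sin (c - y) + sin y"
proof -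
  have s1: "0 \<le> sin (c-y)" using assms by (intro sin_ge_zero) auto
  have s2: "0 \<le> sin y" using assms by (intro sin_ge_zero) auto
  have "sin c = sin (c - y) * cos y + cos (c - y) * sin y"
    using sin_add[of "c-y" y] by simp
  also have "\<dots> \<le> sin (c - y) * 1 + 1 * sin y"
    by (intro add_mono mult_left_mono mult_right_mono s1 s2) auto
  finally show ?thesis by simp
qed

lemma arith_bound:
  fixes A B x :: "nat \<Rightarrow> real" and d d' r c :: real
  assumes ij: "i < m" "j < m" "i \<noteq> j" and A0: "A i = 0" and B0: "B j = 0"
    and H1: "d - (A j + B i) * sin r
           - (\<Sum>k\<in>{k. k < m \<and> k \<notin> {k. k < m \<and> A k > 0 \<and> B k > 0} \<and> k \<noteq> i \<and> k \<noteq> j}.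
                (neg_part (A k) + neg_part (B k))) * sin r
           - (\<Sum>k\<in>{k. k < m \<and> A k > 0 \<and> B k > 0}. min (A k) (B k)) * sin r < 0"
    and H2: "d' - (B i + A j) * sin r
           - (\<Sum>k\<in>{k. k < m \<and> k \<notin> {k. k < m \<and> B k > 0 \<and> A k > 0} \<and> k \<noteq> j \<and> k \<noteq> i}.
                (neg_part (B k) + neg_part (A k))) * sin r
           - (\<Sum>k\<in>{k. k < m \<and> B k > 0 \<and> A k > 0}. min (B k) (A k)) * sin r < 0"
    and dd: "d' = - d"
    and xc: "x i - x j = c" and xk: "\<forall>k<m. x j \<le> x k \<and> x k \<le> x i"
    and r: "0 \<le> r" "r < c" "c < pi/2"
  shows "d + (\<Sum>k<m. A k * sin (x k - x i)) - (\<Sum>k<m. B k * sin (x k - x j)) < 0"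
proof -
  define L where "L = {k. k < m \<and> A k > 0 \<and> B k > 0}"
  define R where "R = {k. k < m \<and> k \<notin> L \<and> k \<noteq> i \<and> k \<noteq> j}"
  have L2: "{k. k < m \<and> B k > 0 \<and> A k > 0} = L" unfolding L_def by auto
  have R2: "{k. k < m \<and> k \<notin> L \<and> k \<noteq> j \<and> k \<noteq> i} = R" unfolding R_def by auto
  define S where "S = (A j + B i) + (\<Sum>k\<in>R. neg_part (A k) + neg_part (B k)) + (\<Sum>k\<in>L. min (A k) (B k))"
  have e1: "(\<Sum>k\<in>R. neg_part (B k) + neg_part (A k)) = (\<Sum>k\<in>R. neg_part (A k) + neg_part (B k))"
    by (simp add: add.commute)
  have e2: "(\<Sum>k\<in>L. min (B k) (A k)) = (\<Sum>k\<in>L. min (A k) (B k))"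
    by (simp add: min.commute)
  have h1: "d < S * sin r" using H1 unfolding S_def L_def[symmetric] R_def[symmetric]
    by (simp add: algebra_simps)
  have h2: "- d < S * sin r" using H2 dd unfolding S_def L2 R2 e1 e2
    by (simp add: algebra_simps)
  have sr: "0 \<le> sin r" using r by (intro sin_ge_zero) auto
  have Spos: "S > 0" and srpos: "sin r > 0"
  proof -
    have "0 < S * sin r" using h1 h2 by linarith
    then show "S > 0" "sin r > 0" using sr by (auto simp: zero_less_mult_iff)
  qed
  have src: "sin r < sin c" using r by (intro sin_monotone_2pi) auto
  have sc: "0 < sin c" using srpos src by linarith
  have main: "d < S * sin c" using h1 Spos src by (smt (verit) mult_strict_left_mono)
  define Bd where "Bd k = (if k = i then - B i * sin c else if k = j then - A j * sin c
      else if k \<in> L then - min (A k) (B k) * sin c else - (neg_part (A k) + neg_part (B k)) * sin c)" for k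
  have pw: "A k * sin (x k - x i) - B k * sin (x k - x j) \<le> Bd k" if k: "k < m" for k
  proof -
    define y where "y = x k - x j"
    have y: "0 \<le> y" "y \<le> c" using xk k xc unfolding y_def by auto
    have xi: "x k - x i = - (c - y)" using xc unfolding y_def by simp
    have s1: "0 \<le> sin (c-y)" using y r by (intro sin_ge_zero) auto
    have s2: "0 \<le> sin y" using y r by (intro sin_ge_zero) auto
    have s1c: "sin (c-y) \<le> sin c" using y r by (intro sin_monotone_2pi_le) auto
    have s2c: "sin y \<le> sin c" using y r by (intro sin_monotone_2pi_le) auto
    have ssum: "sin c \<le> sin (c - y) + sin y" using sin_sub_add[of y c] y r by simp
    have T: "A k * sin (x k - x i) - B k * sin (x k - x j) = - A k * sin (c - y) - B k * sin y"
    proof -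
      have "sin (x k - x i) = - sin (c - y)" by (simp only: xi sin_minus)
      moreover have "x k - x j = y" by (simp add: y_def)
      ultimately show ?thesis by simp
    qed
    show ?thesis
    proof (cases "k = i")
      case True
      then show ?thesis unfolding Bd_def using A0 xc by simp
    next
      case ki: False
      show ?thesis
      proof (cases "k = j")
        case True
        have "x j - x i = - c" using xc by simp
        then have "sin (x j - x i) = - sin c" by simp
        then show ?thesis unfolding Bd_def using B0 ki True by simp
      next
        case kj: False
        show ?thesis
        proof (cases "k \<in> L")
          case True
          then have pos: "A k > 0" "B k > 0" unfolding L_def by auto
          let ?mn = "min (A k) (B k)"
          have "- A k * sin (c - y) - B k * sin y \<le> - ?mn * sin (c - y) - ?mn * sin y"
            using s1 s2 by (intro diff_mono) (auto intro: mult_right_mono)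
          also have "\<dots> = - ?mn * (sin (c-y) + sin y)" by (simp add: algebra_simps)
          also have "\<dots> \<le> - ?mn * sin c" using pos ssum
            by (intro mult_left_mono_neg) auto
          finally show ?thesis unfolding T Bd_def using ki kj True by simp
        next
          case False
          have a1: "- A k * sin (c - y) \<le> - neg_part (A k) * sin c"
          proof -
            have "- A k * sin (c - y) \<le> - neg_part (A k) * sin (c - y)"
              using s1 by (intro mult_right_mono) (auto simp: neg_part_def)
            also have "\<dots> \<le> - neg_part (A k) * sin c"
              using s1c by (intro mult_left_mono) (auto simp: neg_part_def)
            finally show ?thesis .
          qed
          have a2: "- B k * sin y \<le> - neg_part (B k) * sin c"
          proof -
            have "- B k * sin y \<le> - neg_part (B k) * sin y"
              using s2 by (intro mult_right_mono) (auto simp: neg_part_def)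
            also have "\<dots> \<le> - neg_part (B k) * sin c"
              using s2c by (intro mult_left_mono) (auto simp: neg_part_def)
            finally show ?thesis .
          qed
          show ?thesis unfolding T Bd_def using ki kj False a1 a2 by (simp add: algebra_simps)
        qed
      qed
    qed
  qed
  have sumBd: "(\<Sum>k<m. Bd k) = - S * sin c"
  proof -
    have fin: "finite {..<m}" by simp
    have LS: "L \<subseteq> {..<m}" unfolding L_def by auto
    have iL: "i \<notin> L" "j \<notin> L" unfolding L_def using A0 B0 by auto
    have "(\<Sum>k<m. Bd k) = (\<Sum>k\<in>L. Bd k) + (\<Sum>k\<in>{..<m} - L. Bd k)"
      using sum.subset_diff[OF LS fin, of Bd] by simp
    also have "(\<Sum>k\<in>{..<m} - L. Bd k) = Bd i + (\<Sum>k\<in>{..<m} - L - {i}. Bd k)"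
      using ij iL by (intro sum.remove) auto
    also have "(\<Sum>k\<in>{..<m} - L - {i}. Bd k) = Bd j + (\<Sum>k\<in>{..<m} - L - {i} - {j}. Bd k)"
      using ij iL by (intro sum.remove) auto
    also have "{..<m} - L - {i} - {j} = R" unfolding R_def by auto
    also have "(\<Sum>k\<in>R. Bd k) = (\<Sum>k\<in>R. - (neg_part (A k) + neg_part (B k)) * sin c)"
      by (intro sum.cong) (auto simp: R_def Bd_def)
    also have "(\<Sum>k\<in>L. Bd k) = (\<Sum>k\<in>L. - min (A k) (B k) * sin c)"
      using iL by (intro sum.cong) (auto simp: Bd_def)
    finally have eq: "(\<Sum>k<m. Bd k) = (\<Sum>k\<in>L. - min (A k) (B k) * sin c) + (Bd i + (Bd j
       + (\<Sum>k\<in>R. - (neg_part (A k) + neg_part (B k)) * sin c)))" .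
    have "Bd i = - B i * sin c" "Bd j = - A j * sin c" using ij by (auto simp: Bd_def)
    moreover have "(\<Sum>k\<in>L. - min (A k) (B k) * sin c) = - (\<Sum>k\<in>L. min (A k) (B k)) * sin c"
      by (simp add: sum_distrib_right sum_negf)
    moreover have "(\<Sum>k\<in>R. - (neg_part (A k) + neg_part (B k)) * sin c)
       = - (\<Sum>k\<in>R. neg_part (A k) + neg_part (B k)) * sin c"
      by (simp only: sum_distrib_right[symmetric] sum_negf mult_minus_left)
    ultimately show ?thesis unfolding eq S_def by (simp add: algebra_simps)
  qed
  have "(\<Sum>k<m. A k * sin (x k - x i)) - (\<Sum>k<m. B k * sin (x k - x j))
        = (\<Sum>k<m. A k * sin (x k - x i) - B k * sin (x k - x j))"
    by (simp add: sum_subtractf)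
  also have "\<dots> \<le> (\<Sum>k<m. Bd k)" by (intro sum_mono pw) auto
  finally show ?thesis using sumBd main by linarith
qed

lemma key:
  fixes D :: "'p \<Rightarrow> real \<Rightarrow> real"
  assumes fin: "finite P" and cont: "\<forall>p\<in>P. continuous_on {0..} (D p)" and cS: "countable S"
    and init: "\<forall>p\<in>P. D p 0 \<le> r" and rb: "r < b"
    and loc: "\<And>t c. t \<ge> 0 \<Longrightarrow> t \<notin> S \<Longrightarrow> r < c \<Longrightarrow> c < b \<Longrightarrow> \<forall>p\<in>P. D p t \<le> c
              \<Longrightarrow> eventually (\<lambda>s. \<forall>p\<in>P. D p s \<le> c) (at_right t)"
    and T: "T \<ge> 0" and p0: "p0 \<in> P"
  shows "D p0 T \<le> r"
proof (rule ccontr)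
  assume "\<not> D p0 T \<le> r"
  then have big: "D p0 T > r" by simp
  define b' where "b' = min (D p0 T) b"
  have rb': "r < b'" using big rb by (simp add: b'_def)
  define M where "M c = {t\<in>{0..T}. \<forall>p\<in>P. D p t \<le> c}" for c
  define tc where "tc c = Sup (M c)" for c
  have props: "tc c \<in> S \<and> (\<exists>p\<in>P. D p (tc c) = c) \<and> (\<forall>p\<in>P. D p (tc c) \<le> c)"
    if c: "c \<in> {r<..<b'}" for c
  proof -
    have Meq: "M c = {0..T} \<inter> (\<Inter>p\<in>P. {0..T} \<inter> D p -` {..c})"
      unfolding M_def using p0 by auto
    have cl: "closed ({0..T} \<inter> D p -` {..c})" if "p \<in> P" for p
    proof -
      have "continuous_on {0..T} (D p)"
        using cont that by (auto intro: continuous_on_subset)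
      then show ?thesis
        by (intro continuous_closed_preimage) auto
    qed
    have "closed (M c)" unfolding Meq
      by (rule closed_Int[OF closed_atLeastAtMost closed_INT]) (use cl in auto)
    moreover have "0 \<in> M c" using init c T unfolding M_def by force
    moreover have bdd: "bdd_above (M c)" unfolding M_def by (auto intro: bdd_aboveI[of _ T])
    ultimately have tcM: "tc c \<in> M c" unfolding tc_def by (intro closed_contains_Sup) auto
    have "T \<notin> M c" using p0 c unfolding M_def b'_def by force
    then have tcT: "tc c < T" using tcM unfolding M_def by (cases "tc c = T") auto
    have tc0: "tc c \<ge> 0" using tcM unfolding M_def by auto
    have tcle: "\<forall>p\<in>P. D p (tc c) \<le> c" using tcM unfolding M_def by auto
    have no_ev: "\<not> eventually (\<lambda>s. \<forall>p\<in>P. D p s \<le> c) (at_right (tc c))"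
    proof
      assume ev: "eventually (\<lambda>s. \<forall>p\<in>P. D p s \<le> c) (at_right (tc c))"
      have "eventually (\<lambda>s. s < T) (at_right (tc c))"
        using tcT by (auto simp: eventually_at_right_field)
      moreover note eventually_at_right_less[of "tc c"]
      ultimately have "eventually (\<lambda>s. (\<forall>p\<in>P. D p s \<le> c) \<and> s < T \<and> tc c < s) (at_right (tc c))"
        using ev by eventually_elim auto
      then obtain s where s: "\<forall>p\<in>P. D p s \<le> c" "s < T" "tc c < s"
        using eventually_happens[of _ "at_right (tc c)"] by auto
      then have "s \<in> M c" using tc0 unfolding M_def by auto
      then have "s \<le> tc c" unfolding tc_def using bdd by (rule cSup_upper)
      then show False using s by simp
    qed
    have "tc c \<in> S" using loc[OF tc0 _ _ _ tcle] no_ev c b'_def by force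
    moreover have "\<exists>p\<in>P. D p (tc c) = c"
    proof (rule ccontr)
      assume "\<not> (\<exists>p\<in>P. D p (tc c) = c)"
      then have lt: "\<forall>p\<in>P. D p (tc c) < c" using tcle by force
      have "\<forall>p\<in>P. eventually (\<lambda>s. D p s < c) (at_right (tc c))"
      proof
        fix p assume p: "p \<in> P"
        have "(D p \<longlongrightarrow> D p (tc c)) (at (tc c) within {0..})"
          using cont p tc0 by (simp add: continuous_on_def)
        then have "(D p \<longlongrightarrow> D p (tc c)) (at_right (tc c))"
          by (rule tendsto_within_subset) (use tc0 in auto)
        then show "eventually (\<lambda>s. D p s < c) (at_right (tc c))"
          using lt p by (auto intro: order_tendstoD(2))
      qed
      then have "eventually (\<lambda>s. \<forall>p\<in>P. D p s < c) (at_right (tc c))"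
        using fin by (simp add: eventually_ball_finite)
      then have "eventually (\<lambda>s. \<forall>p\<in>P. D p s \<le> c) (at_right (tc c))"
        by (rule eventually_mono) auto
      then show False using no_ev by simp
    qed
    ultimately show ?thesis using tcle by blast
  qed
  have inj: "inj_on tc {r<..<b'}"
  proof (rule inj_onI)
    fix c1 c2 assume c1: "c1 \<in> {r<..<b'}" and c2: "c2 \<in> {r<..<b'}" and eq: "tc c1 = tc c2"
    from props[OF c1] props[OF c2] eq have "c1 \<le> c2" "c2 \<le> c1" by metis+
    then show "c1 = c2" by simp
  qed
  have "tc ` {r<..<b'} \<subseteq> S" using props by blast
  then have "countable (tc ` {r<..<b'})" using cS countable_subset by blast
  then have "countable {r<..<b'}" using inj by (rule countable_image_inj_on)
  then show False using uncountable_open_interval rb' by blast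
qed

lemma deriv_neg_ev:
  fixes f :: "real \<Rightarrow> real"
  assumes "(f has_real_derivative l) (at t within {0..})" "l < 0" "t \<ge> 0"
  shows "eventually (\<lambda>s. f s < f t) (at_right t)"
proof -
  have "(f has_real_derivative l) (at t within {t<..})"
    using assms(1) by (rule has_field_derivative_subset) (use assms(3) in auto)
  then have "((\<lambda>y. (f y - f t) / (y - t)) \<longlongrightarrow> l) (at_right t)"
    by (simp add: has_field_derivative_iff)
  then have "eventually (\<lambda>y. (f y - f t) / (y - t) < 0) (at_right t)"
    using assms(2) by (rule order_tendstoD(2))
  then show ?thesis using eventually_at_right_less[of t]
    by eventually_elim (auto simp: divide_less_0_iff)
qed

theorem lemma1:
  fixes m :: nat and \<omega> :: "nat \<Rightarrow> real \<Rightarrow> real" and a :: "nat \<Rightarrow> nat \<Rightarrow> real \<Rightarrow> real"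
    and r :: real
  assumes "m \<ge> 2"
    and "admissible_TVKR m \<omega> a"
    and "0 \<le> r" and "r < pi / 2"
    and "\<forall>i<m. \<forall>j<m. i \<noteq> j \<longrightarrow> (\<forall>t\<ge>0.
           \<omega> i t - \<omega> j t - (a i j t + a j i t) * sin r
           - (\<Sum>k\<in>{k. k < m \<and> k \<notin> Lambda m a i j t \<and> k \<noteq> i \<and> k \<noteq> j}.
                (neg_part (a i k t) + neg_part (a j k t))) * sin r
           - (\<Sum>k\<in>Lambda m a i j t. min (a i k t) (a j k t)) * sin r < 0)"
  shows "invariant_A m \<omega> a r"
  unfolding invariant_A_def
proof (intro allI impI)
  fix \<theta> and T :: real assume sol: "TVKR_solution m \<omega> a \<theta>" and A0: "in_A m r (\<theta> 0)"
    and T: "0 \<le> T"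
  note H = assms(5)
  have aii: "\<And>i t. i < m \<Longrightarrow> t \<ge> 0 \<Longrightarrow> a i i t = 0"
    using assms(2) unfolding admissible_TVKR_def by auto
  from sol obtain S where contT: "\<forall>i<m. continuous_on {0..} (\<lambda>t. \<theta> t i)" and cS: "countable S"
    and der: "\<forall>t\<in>{0..} - S. \<forall>i<m.
           ((\<lambda>s. \<theta> s i) has_real_derivative
              (\<omega> i t + (\<Sum>j<m. a i j t * sin (\<theta> t j - \<theta> t i)))) (at t within {0..})"
    unfolding TVKR_solution_def by blast
  define P where "P = {..<m} \<times> {..<m}"
  define D where "D p t = \<theta> t (fst p) - \<theta> t (snd p)" for p :: "nat \<times> nat" and t
  have finP: "finite P" unfolding P_def by simp
  have contD: "\<forall>p\<in>P. continuous_on {0..} (D p)"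
    unfolding P_def D_def using contT by (auto intro!: continuous_on_diff)
  have initD: "\<forall>p\<in>P. D p 0 \<le> r"
  proof
    fix p assume "p \<in> P"
    then obtain i j where p: "p = (i,j)" "i < m" "j < m" unfolding P_def by auto
    consider "j < i" | "i < j" | "i = j" by linarith
    then show "D p 0 \<le> r"
    proof cases
      case 1 then have "\<bar>\<theta> 0 i - \<theta> 0 j\<bar> \<le> r" using A0 p unfolding in_A_def by blast
      then show ?thesis using p unfolding D_def by simp
    next
      case 2 then have "\<bar>\<theta> 0 j - \<theta> 0 i\<bar> \<le> r" using A0 p unfolding in_A_def by blast
      then show ?thesis using p unfolding D_def by simp
    next
      case 3 then show ?thesis using p assms(3) unfolding D_def by simp
    qed
  qed
  have loc: "eventually (\<lambda>s. \<forall>p\<in>P. D p s \<le> c) (at_right t)"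
    if t: "t \<ge> 0" "t \<notin> S" and c: "r < c" "c < pi/2" and le: "\<forall>p\<in>P. D p t \<le> c" for t c
  proof -
    have "\<forall>p\<in>P. eventually (\<lambda>s. D p s < c) (at_right t)"
    proof
      fix p assume pP: "p \<in> P"
      then obtain i j where p: "p = (i,j)" and ij: "i < m" "j < m" unfolding P_def by auto
      show "eventually (\<lambda>s. D p s < c) (at_right t)"
      proof (cases "D p t < c")
        case True
        have "(D p \<longlongrightarrow> D p t) (at t within {0..})"
          using contD pP t by (simp add: continuous_on_def)
        then have "(D p \<longlongrightarrow> D p t) (at_right t)"
          by (rule tendsto_within_subset) (use t in auto)
        then show ?thesis using True by (auto intro: order_tendstoD(2))
      next
        case False
        then have eqc: "\<theta> t i - \<theta> t j = c" using le pP p unfolding D_def by force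
        have inj: "i \<noteq> j" using eqc c assms(3) by auto
        have xk: "\<forall>k<m. \<theta> t j \<le> \<theta> t k \<and> \<theta> t k \<le> \<theta> t i"
        proof (intro allI impI)
          fix k assume k: "k < m"
          have "D (i,k) t \<le> c" "D (k,j) t \<le> c" using le k ij unfolding P_def by auto
          then show "\<theta> t j \<le> \<theta> t k \<and> \<theta> t k \<le> \<theta> t i" using eqc unfolding D_def by auto
        qed
        note H1 = H[rule_format, OF ij inj t(1)]
        note H2 = H[rule_format, OF ij(2) ij(1) inj[symmetric] t(1)]
        have bound: "(\<omega> i t - \<omega> j t) + (\<Sum>k<m. a i k t * sin (\<theta> t k - \<theta> t i))
             - (\<Sum>k<m. a j k t * sin (\<theta> t k - \<theta> t j)) < 0"
          by (rule arith_bound[where A="\<lambda>k. a i k t" and B="\<lambda>k. a j k t" and d'="\<omega> j t - \<omega> i t"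
                 and r=r and c=c, OF ij inj aii[OF ij(1) t(1)] aii[OF ij(2) t(1)]])
             (use H1 H2 eqc xk c assms(3) in \<open>simp_all add: Lambda_def\<close>)
        have di: "((\<lambda>s. \<theta> s i) has_real_derivative
              (\<omega> i t + (\<Sum>k<m. a i k t * sin (\<theta> t k - \<theta> t i)))) (at t within {0..})"
          using der t ij by auto
        have dj: "((\<lambda>s. \<theta> s j) has_real_derivative
              (\<omega> j t + (\<Sum>k<m. a j k t * sin (\<theta> t k - \<theta> t j)))) (at t within {0..})"
          using der t ij by auto
        have dd: "(D p has_real_derivative
              ((\<omega> i t + (\<Sum>k<m. a i k t * sin (\<theta> t k - \<theta> t i))) -
               (\<omega> j t + (\<Sum>k<m. a j k t * sin (\<theta> t k - \<theta> t j))))) (at t within {0..})"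
          unfolding p D_def fst_conv snd_conv by (rule DERIV_diff[OF di dj])
        have "eventually (\<lambda>s. D p s < D p t) (at_right t)"
          by (rule deriv_neg_ev[OF dd _ t(1)]) (use bound in simp)
        then show ?thesis using eqc unfolding p D_def by simp
      qed
    qed
    then have "eventually (\<lambda>s. \<forall>p\<in>P. D p s < c) (at_right t)"
      using finP by (simp add: eventually_ball_finite)
    then show ?thesis by (rule eventually_mono) auto
  qed
  have all: "D p T \<le> r" if "p \<in> P" for p
    by (rule key[OF finP contD cS initD assms(4) loc T that]) auto
  show "in_A m r (\<theta> T)" unfolding in_A_def
  proof (intro allI impI)
    fix i j assume "i < m" "j < m" "j < i"
    then have "D (i,j) T \<le> r" "D (j,i) T \<le> r" using all unfolding P_def by auto
    then show "\<bar>\<theta> T i - \<theta> T j\<bar> \<le> r" unfolding D_def by auto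
  qed
qed

end
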